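(* For every integer $N\ge1$ there exists $\delta_0>0$ depending only on $N$ such that the following holds. Let $U_\varphi,V_\varphi\subset\mathbb R^2$ be open with $\overline B_\infty(0,1)\subset U_\varphi\cap V_\varphi$, where $\overline B_\infty(0,1)=\{(x_1,x_2):\max(|x_1|,|x_2|)\le 1\}$, and let $\varphi:U_\varphi\to V_\varphi$ be a $C^{N+1}$ diffeomorphism onto its image with $\varphi(0)=0$, $d\varphi(0)=\mathrm{diag}(2,1/2)$, and $\sup_{U_\varphi}|\partial^\alpha\varphi|\le\delta$ for all $2\le|\alpha|\le N+1$, where $0<\delta\le\delta_0$. Let $F:[-1,1]\to\mathbb R$ be a $C^1$ function with $F(0)=0$ and $\sup|F'|\le 1$. Then there exists a function $\Phi_uF:[-1,1]\to\mathbb R$ with $\Phi_uF(0)=0$ such that $$\varphi(\mathcal G_u(F))\cap\{|x_1|\le 1\}=\mathcal G_u(\Phi_uF),$$ where for a function $H:[-1,1]\to\mathbb R$ we write $\mathcal G_u(H):=\{(x_1,x_2)\in\mathbb R^2:|x_1|\le1,\ x_2=H(x_1)\}$. *)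

theory Defs
  imports "HOL-Analysis.Analysis"
begin

definition pd1 :: "(real \<times> real \<Rightarrow> real) \<Rightarrow> real \<times> real \<Rightarrow> real" where
  "pd1 f p = deriv (\<lambda>t. f (t, snd p)) (fst p)"

definition pd2 :: "(real \<times> real \<Rightarrow> real) \<Rightarrow> real \<times> real \<Rightarrow> real" where
  "pd2 f p = deriv (\<lambda>t. f (fst p, t)) (snd p)"

definition pderiv_mi :: "nat \<times> nat \<Rightarrow> (real \<times> real \<Rightarrow> real) \<Rightarrow> real \<times> real \<Rightarrow> real" where
  "pderiv_mi \<alpha> f = (pd1 ^^ fst \<alpha>) ((pd2 ^^ snd \<alpha>) f)"

definition vpderiv_mi :: "nat \<times> nat \<Rightarrow> (real \<times> real \<Rightarrow> real \<times> real) \<Rightarrow> real \<times> real \<Rightarrow> real \<times> real" where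
  "vpderiv_mi \<alpha> f p = (pderiv_mi \<alpha> (\<lambda>q. fst (f q)) p, pderiv_mi \<alpha> (\<lambda>q. snd (f q)) p)"

fun Ck :: "nat \<Rightarrow> (real \<times> real) set \<Rightarrow> (real \<times> real \<Rightarrow> real) \<Rightarrow> bool" where
  "Ck 0 U f = continuous_on U f"
| "Ck (Suc k) U f = (f differentiable_on U \<and> Ck k U (pd1 f) \<and> Ck k U (pd2 f))"

definition Ck_map :: "nat \<Rightarrow> (real \<times> real) set \<Rightarrow> (real \<times> real \<Rightarrow> real \<times> real) \<Rightarrow> bool" where
  "Ck_map k U f = (Ck k U (\<lambda>q. fst (f q)) \<and> Ck k U (\<lambda>q. snd (f q)))"

definition Ck_diffeo_onto_image :: "nat \<Rightarrow> (real \<times> real) set \<Rightarrow> (real \<times> real \<Rightarrow> real \<times> real) \<Rightarrow> bool" where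
  "Ck_diffeo_onto_image k U f =
     (inj_on f U \<and> open (f ` U) \<and> Ck_map k U f \<and> Ck_map k (f ` U) (the_inv_into U f))"

definition closed_unit_box :: "(real \<times> real) set" where
  "closed_unit_box = {x. max \<bar>fst x\<bar> \<bar>snd x\<bar> \<le> 1}"

definition graph_u :: "(real \<Rightarrow> real) \<Rightarrow> (real \<times> real) set" where
  "graph_u H = {x. \<bar>fst x\<bar> \<le> 1 \<and> snd x = H (fst x)}"

definition C1_on_interval :: "(real \<Rightarrow> real) \<Rightarrow> (real \<Rightarrow> real) \<Rightarrow> bool" where
  "C1_on_interval F F' =
     ((\<forall>x\<in>{-1..1}. (F has_real_derivative F' x) (at x within {-1..1})) \<and> continuous_on {-1..1} F')"

end

theory Submission
  imports Defs
begin


lemma lip1: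
  fixes f f' :: "real \<Rightarrow> real"
  assumes d: "\<And>x. x\<in>{-1..1} \<Longrightarrow> (f has_real_derivative f' x) (at x within {-1..1})"
    and b: "\<And>x. x\<in>{-1..1} \<Longrightarrow> \<bar>f' x\<bar> \<le> M"
    and x: "x\<in>{-1..1}" and y: "y\<in>{-1..1}"
  shows "\<bar>f x - f y\<bar> \<le> M*\<bar>x-y\<bar>"
proof -
  have main: "\<bar>f b - f a\<bar> \<le> M*\<bar>b-a\<bar>" if ab: "a \<le> b" "a \<in> {-1..1}" "b\<in>{-1..1}" for a b
  proof -
    have "\<exists>z\<in>{a..b}. f b - f a = (\<lambda> h. f' z * h) (b - a)"
    proof (rule mvt_very_simple[OF ab(1)])
      fix z assume "a \<le> z" "z \<le> b"
      hence z: "z \<in> {-1..1}" "{a..b} \<subseteq> {-1..1}" using ab by auto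
      show "(f has_derivative (\<lambda> h. f' z * h)) (at z within {a..b})"
        using has_field_derivative_subset[OF d[OF z(1)] z(2)]
        by (simp add: has_field_derivative_def)
    qed
    then obtain z where z: "z\<in>{a..b}" "f b - f a = (b-a) * f' z" by auto
    have "z \<in> {-1..1}" using z ab by auto
    hence "\<bar>f' z\<bar> \<le> M" by (rule b)
    thus ?thesis using z ab by (simp add: abs_mult mult.commute mult_right_mono)
  qed
  show ?thesis
  proof (cases "y \<le> x")
    case True thus ?thesis using main[OF True y x] by simp
  next
    case False thus ?thesis using main[of x y] x y by (simp add: abs_minus_commute)
  qed
qed

lemma mono1:
  fixes f f' :: "real \<Rightarrow> real"
  assumes d: "\<And>x. x\<in>{-1..1} \<Longrightarrow> (f has_real_derivative f' x) (at x within {-1..1})"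
    and b: "\<And>x. x\<in>{-1..1} \<Longrightarrow> m \<le> f' x"
    and ab: "a \<le> b" "a \<in> {-1..1}" "b\<in>{-1..1}"
  shows "m*(b-a) \<le> f b - f a"
proof -
    have "\<exists>z\<in>{a..b}. f b - f a = (\<lambda> h. f' z * h) (b - a)"
    proof (rule mvt_very_simple[OF ab(1)])
      fix z assume "a \<le> z" "z \<le> b"
      hence z: "z \<in> {-1..1}" "{a..b} \<subseteq> {-1..1}" using ab by auto
      show "(f has_derivative (\<lambda> h. f' z * h)) (at z within {a..b})"
        using has_field_derivative_subset[OF d[OF z(1)] z(2)]
        by (simp add: has_field_derivative_def)
    qed
    then obtain z where z: "z\<in>{a..b}" "f b - f a = (b-a) * f' z" by auto
    have "z \<in> {-1..1}" using z ab by auto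
    hence "m \<le> f' z" by (rule b)
    thus ?thesis using z ab by (simp add: mult.commute mult_right_mono)
qed

lemma partial1:
  assumes "f differentiable (at (a,b))"
  shows "((\<lambda>t. f (t,b)) has_real_derivative pd1 f (a,b)) (at a)"
proof -
  obtain D where D: "(f has_derivative D) (at (a,b))" using assms differentiable_def by blast
  have p: "((\<lambda>t::real. (t,b)) has_derivative (\<lambda>t. (t,0))) (at a)"
    by (auto intro!: derivative_eq_intros)
  have "((\<lambda>t. f (t,b)) has_derivative (\<lambda>t. D (t,0))) (at a)"
    using has_derivative_compose[OF p, of f D] D by simp
  hence "(\<lambda>t. f (t,b)) differentiable at a" using differentiable_def by blast
  thus ?thesis unfolding pd1_def using DERIV_deriv_iff_real_differentiable by simp
qed

lemma partial2:
  assumes "f differentiable (at (a,b))"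
  shows "((\<lambda>t. f (a,t)) has_real_derivative pd2 f (a,b)) (at b)"
proof -
  obtain D where D: "(f has_derivative D) (at (a,b))" using assms differentiable_def by blast
  have p: "((\<lambda>t::real. (a,t)) has_derivative (\<lambda>t. (0,t))) (at b)"
    by (auto intro!: derivative_eq_intros)
  have "((\<lambda>t. f (a,t)) has_derivative (\<lambda>t. D (0,t))) (at b)"
    using has_derivative_compose[OF p, of f D] D by simp
  hence "(\<lambda>t. f (a,t)) differentiable at b" using differentiable_def by blast
  thus ?thesis unfolding pd2_def using DERIV_deriv_iff_real_differentiable by simp
qed

lemma pd_at0:
  fixes \<phi> :: "real \<times> real \<Rightarrow> real \<times> real"
  assumes D: "(\<phi> has_derivative (\<lambda>(x1, x2). (2 * x1, x2 / 2))) (at (0, 0))"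
  shows "pd1 (\<lambda>q. fst (\<phi> q)) (0,0) = 2" "pd2 (\<lambda>q. fst (\<phi> q)) (0,0) = 0"
proof -
  have D1: "((\<lambda>q. fst (\<phi> q)) has_derivative (\<lambda>q. fst ((\<lambda>(x1, x2). (2 * x1, x2 / 2)) q))) (at (0,0))"
    using has_derivative_fst[OF D] .
  have p: "((\<lambda>t::real. (t,0::real)) has_derivative (\<lambda>t. (t,0))) (at 0)"
    by (auto intro!: derivative_eq_intros)
  have "((\<lambda>t. fst (\<phi> (t,0))) has_derivative (\<lambda>t. fst ((\<lambda>(x1, x2). (2 * x1, x2 / 2)) (t,0)))) (at 0)"
    using has_derivative_compose[OF p D1] by simp
  hence "((\<lambda>t. fst (\<phi> (t,0))) has_real_derivative 2) (at 0)"
    by (simp add: has_field_derivative_def)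
  thus "pd1 (\<lambda>q. fst (\<phi> q)) (0,0) = 2" unfolding pd1_def by (simp add: DERIV_imp_deriv)
  have p: "((\<lambda>t::real. (0::real,t)) has_derivative (\<lambda>t. (0,t))) (at 0)"
    by (auto intro!: derivative_eq_intros)
  have "((\<lambda>t. fst (\<phi> (0,t))) has_derivative (\<lambda>t. fst ((\<lambda>(x1, x2). (2 * x1, x2 / 2)) (0,t)))) (at 0)"
    using has_derivative_compose[OF p D1] by simp
  moreover have "((*) (0::real)) = (\<lambda>t. 0)" by auto
  ultimately have "((\<lambda>t. fst (\<phi> (0,t))) has_real_derivative 0) (at 0)"
    by (simp add: has_field_derivative_def)
  thus "pd2 (\<lambda>q. fst (\<phi> q)) (0,0) = 0" unfolding pd2_def by (simp add: DERIV_imp_deriv)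
qed


theorem lemma2p2:
  fixes N :: nat
  assumes "N \<ge> 1"
  shows "\<exists>\<delta>0::real. \<delta>0 > 0 \<and>
    (\<forall>(U::(real \<times> real) set) (V::(real \<times> real) set) (\<phi>::real \<times> real \<Rightarrow> real \<times> real)
       (\<delta>::real) (F::real \<Rightarrow> real) (F'::real \<Rightarrow> real).
      open U \<and> open V \<and> closed_unit_box \<subseteq> U \<inter> V \<and>
      \<phi> ` U \<subseteq> V \<and> Ck_diffeo_onto_image (N + 1) U \<phi> \<and>
      \<phi> (0, 0) = (0, 0) \<and>
      (\<phi> has_derivative (\<lambda>(x1, x2). (2 * x1, x2 / 2))) (at (0, 0)) \<and>
      0 < \<delta> \<and> \<delta> \<le> \<delta>0 \<and>
      (\<forall>\<alpha>. 2 \<le> fst \<alpha> + snd \<alpha> \<and> fst \<alpha> + snd \<alpha> \<le> N + 1 \<longrightarrow>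
          (\<forall>p\<in>U. norm (vpderiv_mi \<alpha> \<phi> p) \<le> \<delta>)) \<and>
      C1_on_interval F F' \<and> F 0 = 0 \<and> (\<forall>x\<in>{-1..1}. \<bar>F' x\<bar> \<le> 1)
      \<longrightarrow> (\<exists>G::real \<Rightarrow> real. G 0 = 0 \<and>
             \<phi> ` graph_u F \<inter> {x. \<bar>fst x\<bar> \<le> 1} = graph_u G))"
proof (rule exI[of _ "1/8"], intro conjI allI impI)
  show "(0::real) < 1/8" by simp
  fix U V :: "(real \<times> real) set" and \<phi> :: "real \<times> real \<Rightarrow> real \<times> real"
    and \<delta> :: real and F F' :: "real \<Rightarrow> real"
  assume H: "open U \<and> open V \<and> closed_unit_box \<subseteq> U \<inter> V \<and>
      \<phi> ` U \<subseteq> V \<and> Ck_diffeo_onto_image (N + 1) U \<phi> \<and>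
      \<phi> (0, 0) = (0, 0) \<and>
      (\<phi> has_derivative (\<lambda>(x1, x2). (2 * x1, x2 / 2))) (at (0, 0)) \<and>
      0 < \<delta> \<and> \<delta> \<le> 1/8 \<and>
      (\<forall>\<alpha>. 2 \<le> fst \<alpha> + snd \<alpha> \<and> fst \<alpha> + snd \<alpha> \<le> N + 1 \<longrightarrow>
          (\<forall>p\<in>U. norm (vpderiv_mi \<alpha> \<phi> p) \<le> \<delta>)) \<and>
      C1_on_interval F F' \<and> F 0 = 0 \<and> (\<forall>x\<in>{-1..1}. \<bar>F' x\<bar> \<le> 1)"
  define f1 where "f1 = (\<lambda>q. fst (\<phi> q))"
  define f2 where "f2 = (\<lambda>q. snd (\<phi> q))"
  define k where "k = pd1 f1"
  define h where "h = pd2 f1"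
  have oU: "open U" using H by blast
  have box: "\<And>a b. a \<in> {-1..1} \<Longrightarrow> b \<in> {-1..1} \<Longrightarrow> (a,b) \<in> U"
    using H unfolding closed_unit_box_def by auto
  have dl: "\<delta> \<le> 1/8" "0 < \<delta>" using H by auto
  obtain M where M: "N = Suc M" using assms by (cases N) auto
  have CkM: "Ck (Suc (Suc M)) U f1" "Ck (Suc (Suc M)) U f2"
    using H M unfolding Ck_diffeo_onto_image_def Ck_map_def f1_def f2_def by auto
  have df1: "f1 differentiable_on U" and dk: "k differentiable_on U" and dh: "h differentiable_on U"
    using CkM(1) unfolding k_def h_def by auto
  have cf2: "continuous_on U f2" using CkM(2) by (auto intro: differentiable_imp_continuous_on)
  have cf1: "continuous_on U f1" using df1 by (auto intro: differentiable_imp_continuous_on)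
  have df1': "\<And>a b. a \<in> {-1..1} \<Longrightarrow> b \<in> {-1..1} \<Longrightarrow> f1 differentiable (at (a,b))"
    using df1 box oU differentiable_on_eq_differentiable_at by blast
  have dk': "\<And>a b. a \<in> {-1..1} \<Longrightarrow> b \<in> {-1..1} \<Longrightarrow> k differentiable (at (a,b))"
    using dk box oU differentiable_on_eq_differentiable_at by blast
  have dh': "\<And>a b. a \<in> {-1..1} \<Longrightarrow> b \<in> {-1..1} \<Longrightarrow> h differentiable (at (a,b))"
    using dh box oU differentiable_on_eq_differentiable_at by blast
  have bnd: "\<And>\<alpha> p. 2 \<le> fst \<alpha> + snd \<alpha> \<Longrightarrow> fst \<alpha> + snd \<alpha> \<le> N + 1 \<Longrightarrow> p \<in> U \<Longrightarrow>
      \<bar>pderiv_mi \<alpha> f1 p\<bar> \<le> \<delta>"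
  proof -
    fix \<alpha> p assume a: "2 \<le> fst \<alpha> + snd \<alpha>" "fst \<alpha> + snd \<alpha> \<le> N + 1" "p \<in> U"
    have "norm (vpderiv_mi \<alpha> \<phi> p) \<le> \<delta>" using H a by blast
    moreover have "norm (pderiv_mi \<alpha> f1 p) \<le> norm (vpderiv_mi \<alpha> \<phi> p)"
      unfolding vpderiv_mi_def f1_def by (rule norm_fst_le)
    ultimately show "\<bar>pderiv_mi \<alpha> f1 p\<bar> \<le> \<delta>" by simp
  qed
  have b11: "\<And>a b. a \<in> {-1..1} \<Longrightarrow> b \<in> {-1..1} \<Longrightarrow> \<bar>pd1 k (a,b)\<bar> \<le> \<delta>"
    using bnd[of "(2,0)"] box M unfolding k_def pderiv_mi_def by (simp add: numeral_2_eq_2)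
  have b12: "\<And>a b. a \<in> {-1..1} \<Longrightarrow> b \<in> {-1..1} \<Longrightarrow> \<bar>pd1 h (a,b)\<bar> \<le> \<delta>"
    using bnd[of "(1,1)"] box M unfolding h_def pderiv_mi_def by simp
  have b22: "\<And>a b. a \<in> {-1..1} \<Longrightarrow> b \<in> {-1..1} \<Longrightarrow> \<bar>pd2 h (a,b)\<bar> \<le> \<delta>"
    using bnd[of "(0,2)"] box M unfolding h_def pderiv_mi_def by (simp add: numeral_2_eq_2)
  have k0: "k (0,0) = 2" and h0: "h (0,0) = 0"
    using pd_at0 H unfolding k_def h_def f1_def by auto
  have m11: "0 \<in> {-1..(1::real)}" by simp
  have hA: "\<bar>h (x,0) - h (0,0)\<bar> \<le> \<delta> * \<bar>x - 0\<bar>" if x: "x \<in> {-1..1}" for x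
  proof (rule lip1[where f="\<lambda>t. h (t,0)" and f'="\<lambda>t. pd1 h (t,0)"])
    fix t :: real assume t: "t \<in> {-1..1}"
    show "((\<lambda>t. h (t,0)) has_real_derivative pd1 h (t,0)) (at t within {-1..1})"
      by (rule has_field_derivative_at_within, rule partial1, rule dh'[OF t m11])
    show "\<bar>pd1 h (t,0)\<bar> \<le> \<delta>" by (rule b12[OF t m11])
  qed (rule x, rule m11)
  have hB: "\<bar>h (x,y) - h (x,0)\<bar> \<le> \<delta> * \<bar>y - 0\<bar>" if x: "x \<in> {-1..1}" "y \<in> {-1..1}" for x y
  proof (rule lip1[where f="\<lambda>t. h (x,t)" and f'="\<lambda>t. pd2 h (x,t)"])
    fix t :: real assume t: "t \<in> {-1..1}"
    show "((\<lambda>t. h (x,t)) has_real_derivative pd2 h (x,t)) (at t within {-1..1})"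
      by (rule has_field_derivative_at_within, rule partial2, rule dh'[OF x(1) t])
    show "\<bar>pd2 h (x,t)\<bar> \<le> \<delta>" by (rule b22[OF x(1) t])
  qed (rule x(2), rule m11)
  have hbound: "\<bar>h (x,y)\<bar> \<le> 2*\<delta>" if x: "x \<in> {-1..1}" "y \<in> {-1..1}" for x y
  proof -
    have "\<delta> * \<bar>x - 0\<bar> \<le> \<delta>" "\<delta> * \<bar>y - 0\<bar> \<le> \<delta>" using x dl by (auto intro!: mult_left_le)
    thus ?thesis using hA[OF x(1)] hB[OF x] h0 by linarith
  qed
  have kC: "\<bar>k (x,0) - k (0,0)\<bar> \<le> \<delta> * \<bar>x - 0\<bar>" if x: "x \<in> {-1..1}" for x
  proof (rule lip1[where f="\<lambda>t. k (t,0)" and f'="\<lambda>t. pd1 k (t,0)"])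
    fix t :: real assume t: "t \<in> {-1..1}"
    show "((\<lambda>t. k (t,0)) has_real_derivative pd1 k (t,0)) (at t within {-1..1})"
      by (rule has_field_derivative_at_within, rule partial1, rule dk'[OF t m11])
    show "\<bar>pd1 k (t,0)\<bar> \<le> \<delta>" by (rule b11[OF t m11])
  qed (rule x, rule m11)
  have kbound: "2 - \<delta> \<le> k (x,0)" if x: "x \<in> {-1..1}" for x
  proof -
    have "\<delta> * \<bar>x - 0\<bar> \<le> \<delta>" using x dl by (auto intro!: mult_left_le)
    thus ?thesis using kC[OF x] k0 by linarith
  qed
  have hD: "\<bar>h (s,y) - h (s',y)\<bar> \<le> \<delta> * \<bar>s - s'\<bar>"
    if x: "s \<in> {-1..1}" "s' \<in> {-1..1}" "y \<in> {-1..1}" for s s' y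
  proof (rule lip1[where f="\<lambda>t. h (t,y)" and f'="\<lambda>t. pd1 h (t,y)"])
    fix t :: real assume t: "t \<in> {-1..1}"
    show "((\<lambda>t. h (t,y)) has_real_derivative pd1 h (t,y)) (at t within {-1..1})"
      by (rule has_field_derivative_at_within, rule partial1, rule dh'[OF t x(3)])
    show "\<bar>pd1 h (t,y)\<bar> \<le> \<delta>" by (rule b12[OF t x(3)])
  qed (rule x(1), rule x(2))
  have fE: "\<bar>(f1 (s,y) - f1 (s',y)) - (f1 (s,0) - f1 (s',0))\<bar> \<le> (\<delta> * \<bar>s - s'\<bar>) * \<bar>y - 0\<bar>"
    if x: "s \<in> {-1..1}" "s' \<in> {-1..1}" "y \<in> {-1..1}" for s s' y
  proof (rule lip1[where f="\<lambda>t. f1 (s,t) - f1 (s',t)" and f'="\<lambda>t. h (s,t) - h (s',t)"])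
    fix t :: real assume t: "t \<in> {-1..1}"
    have "((\<lambda>t. f1 (s,t) - f1 (s',t)) has_real_derivative h (s,t) - h (s',t)) (at t)"
      unfolding h_def by (intro DERIV_diff partial2 df1'[OF x(1) t] df1'[OF x(2) t])
    thus "((\<lambda>t. f1 (s,t) - f1 (s',t)) has_real_derivative h (s,t) - h (s',t)) (at t within {-1..1})"
      by (rule has_field_derivative_at_within)
    show "\<bar>h (s,t) - h (s',t)\<bar> \<le> \<delta> * \<bar>s - s'\<bar>" by (rule hD[OF x(1,2) t])
  qed (rule x(3), rule m11)
  have fF: "(2 - \<delta>) * (s - s') \<le> f1 (s,0) - f1 (s',0)"
    if x: "s' \<le> s" "s \<in> {-1..1}" "s' \<in> {-1..1}" for s s'
  proof (rule mono1[where f="\<lambda>t. f1 (t,0)" and f'="\<lambda>t. k (t,0)"])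
    fix t :: real assume t: "t \<in> {-1..1}"
    show "((\<lambda>t. f1 (t,0)) has_real_derivative k (t,0)) (at t within {-1..1})"
      unfolding k_def by (rule has_field_derivative_at_within, rule partial1, rule df1'[OF t m11])
    show "2 - \<delta> \<le> k (t,0)" by (rule kbound[OF t])
  qed (rule x(1), rule x(3), rule x(2))
  have fG: "\<bar>f1 (s,y) - f1 (s,y')\<bar> \<le> (2*\<delta>) * \<bar>y - y'\<bar>"
    if x: "s \<in> {-1..1}" "y \<in> {-1..1}" "y' \<in> {-1..1}" for s y y'
  proof (rule lip1[where f="\<lambda>t. f1 (s,t)" and f'="\<lambda>t. h (s,t)"])
    fix t :: real assume t: "t \<in> {-1..1}"
    show "((\<lambda>t. f1 (s,t)) has_real_derivative h (s,t)) (at t within {-1..1})"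
      unfolding h_def by (rule has_field_derivative_at_within, rule partial2, rule df1'[OF x(1) t])
    show "\<bar>h (s,t)\<bar> \<le> 2*\<delta>" by (rule hbound[OF x(1) t])
  qed (rule x(2), rule x(3))
  have FC1: "C1_on_interval F F'" and F0: "F 0 = 0" and F'b: "\<forall>x\<in>{-1..1}. \<bar>F' x\<bar> \<le> 1"
    using H by auto
  have Fd: "\<And>x. x \<in> {-1..1} \<Longrightarrow> (F has_real_derivative F' x) (at x within {-1..1})"
    using FC1 unfolding C1_on_interval_def by auto
  have FH: "\<bar>F s - F s'\<bar> \<le> 1 * \<bar>s - s'\<bar>" if x: "s \<in> {-1..1}" "s' \<in> {-1..1}" for s s'
    by (rule lip1[where f=F and f'=F']) (use Fd F'b x in auto)
  have Fin: "F s \<in> {-1..1}" if x: "s \<in> {-1..1}" for s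
    using FH[OF x m11] F0 x by auto
  define g where "g = (\<lambda>s. f1 (s, F s))"
  have key: "(3/2) * (s - s') \<le> g s - g s'" if x: "s' \<le> s" "s \<in> {-1..1}" "s' \<in> {-1..1}" for s s'
  proof -
    have e1: "\<bar>(f1 (s,F s) - f1 (s',F s)) - (f1 (s,0) - f1 (s',0))\<bar> \<le> (\<delta> * \<bar>s - s'\<bar>) * \<bar>F s - 0\<bar>"
      using fE x Fin by blast
    have "(\<delta> * \<bar>s - s'\<bar>) * \<bar>F s - 0\<bar> \<le> (\<delta> * \<bar>s - s'\<bar>) * 1"
      using Fin[OF x(2)] dl by (intro mult_left_mono) auto
    hence e1': "(\<delta> * (s - s')) * \<bar>F s - 0\<bar> \<le> \<delta> * (s - s')" using x by simp
    have e2: "\<bar>f1 (s',F s) - f1 (s',F s')\<bar> \<le> (2*\<delta>) * \<bar>F s - F s'\<bar>"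
      using fG x Fin by blast
    have "(2*\<delta>) * \<bar>F s - F s'\<bar> \<le> (2*\<delta>) * (1 * \<bar>s - s'\<bar>)"
      using FH[OF x(2,3)] dl by (intro mult_left_mono) auto
    hence e2': "(2*\<delta>) * \<bar>F s - F s'\<bar> \<le> (2*\<delta>) * (s - s')" using x by simp
    have e3: "(2 - \<delta>) * (s - s') \<le> f1 (s,0) - f1 (s',0)" using fF x by blast
    have e4: "(3/2) * (s - s') \<le> (2 - 4*\<delta>) * (s - s')"
      using dl x by (intro mult_right_mono) auto
    have "g s - g s' = (f1 (s,F s) - f1 (s',F s)) + (f1 (s',F s) - f1 (s',F s'))"
      unfolding g_def by simp
    thus ?thesis using e1 e1' e2 e2' e3 e4 x by (simp add: algebra_simps abs_le_iff) linarith
  qed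
  have g0: "g 0 = 0" using H F0 unfolding g_def f1_def by simp
  have g1: "1 \<le> g 1" using key[of 0 1] g0 by simp
  have gm1: "g (-1) \<le> -1" using key[of "-1" 0] g0 by simp
  have ginj: "s = s'" if "s \<in> {-1..1}" "s' \<in> {-1..1}" "g s = g s'" for s s'
    using key[of s s'] key[of s' s] that by (cases "s' \<le> s") auto
  have cF: "continuous_on {-1..1} F" by (rule DERIV_continuous_on[OF Fd])
  have cg: "continuous_on {-1..1} g"
    unfolding g_def
    by (rule continuous_on_compose2[OF cf1, where f="\<lambda>s. (s, F s)"])
       (use cF box Fin in \<open>auto intro!: continuous_intros\<close>)
  define ginv where "ginv = (\<lambda>t. THE s. s \<in> {-1..1} \<and> g s = t)"
  have ginv: "ginv (g s) = s" if "s \<in> {-1..1}" for s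
    unfolding ginv_def by (rule the_equality) (use that ginj in auto)
  define G where "G = (\<lambda>t. f2 (ginv t, F (ginv t)))"
  have phis: "\<phi> (s, F s) = (g s, f2 (s, F s))" for s unfolding g_def f1_def f2_def by simp
  show "\<exists>G. G 0 = 0 \<and> \<phi> ` graph_u F \<inter> {x. \<bar>fst x\<bar> \<le> 1} = graph_u G"
  proof (intro exI[of _ G] conjI)
    show "G 0 = 0" using ginv[OF m11] g0 H F0 unfolding G_def f2_def by simp
    show "\<phi> ` graph_u F \<inter> {x. \<bar>fst x\<bar> \<le> 1} = graph_u G"
    proof (intro equalityI subsetI)
      fix x assume "x \<in> \<phi> ` graph_u F \<inter> {x. \<bar>fst x\<bar> \<le> 1}"
      then obtain p where p: "p \<in> graph_u F" "x = \<phi> p" "\<bar>fst x\<bar> \<le> 1" by blast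
      define s where "s = fst p"
      have pe: "p = (s, F s)" using p(1) unfolding graph_u_def s_def by (cases p) auto
      have s: "s \<in> {-1..1}" "x = \<phi> (s, F s)" "\<bar>fst x\<bar> \<le> 1"
        using p pe unfolding graph_u_def s_def by auto
      show "x \<in> graph_u G" using s ginv[OF s(1)] unfolding graph_u_def G_def phis by simp
    next
      fix x assume "x \<in> graph_u G"
      then obtain t where t: "\<bar>t\<bar> \<le> 1" "x = (t, G t)" unfolding graph_u_def
        by (cases x) auto
      obtain s where s: "-1 \<le> s" "s \<le> 1" "g s = t"
      proof -
        have "g (-1) \<le> t" "t \<le> g 1" using gm1 g1 t(1) by auto
        from IVT'[OF this _ cg] show ?thesis using that by auto
      qed
      have "x = \<phi> (s, F s)" using s t ginv[of s] unfolding G_def phis by auto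
      moreover have "(s, F s) \<in> graph_u F" using s unfolding graph_u_def by simp
      moreover have "\<bar>fst x\<bar> \<le> 1" using t by simp
      ultimately show "x \<in> \<phi> ` graph_u F \<inter> {x. \<bar>fst x\<bar> \<le> 1}" by blast
    qed
  qed
qed

end
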